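(* Let $A$ be an expanding cellular automaton (XCA) and let $w$ be an input of length $n$. Then after $t \in \mathbb{N}_0$ steps, $A$ has at most $a(t) = (n+3)2^t - 3$ active cells. Moreover, this upper bound is sharp (it is attained).
   Context: An XCA is a one-dimensional cellular automaton with state set $Q$, standard neighborhood $N=\{-1,0,1\}$, a local transition function $\delta\colon Q^N \to Q$, a quiescent state $q$, and a distinguished hidden state $\odot \in Q$; $\delta(\ell)=\odot$ is allowed only if $\ell(0)=\odot$. Cells not in state $q$ (and not hidden) are called active, and an active cell may never become quiescent. A global configuration is $c\colon \mathbb{Z}\to Q$. One global step works as follows: every visible cell $z$ is updated by the standard CA rule $\delta(c(z-1),c(z),c(z+1))$, and in addition, between every two adjacent cells $z,z+1$ there is a hidden cell (whose left and right neighbors are $c(z)$ and $c(z+1)$) which takes the state $\delta(c(z),\odot,c(z+1))$; the resulting sequence (with the new cells inserted between their two parents) is then contracted by deleting every cell whose state is $\odot$ (so hidden cells that did not leave state $\odot$ remain invisible and a fresh hidden cell again exists between any two adjacent visible cells in the next step). As a decider, $A$ starts with the input word $w$ written on cells $0,\dots,|w|-1$, surrounded on both sides by quiescent cells; initially there are thus $n$ active cells. *)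

theory Defs
  imports Main
begin

text \<open>An XCA: state set Q (finite), local rule delta on the standard neighbourhood
  (left, centre, right), quiescent state q, hidden state (odot), and the input alphabet.\<close>

record 'q xca =
  x_states :: "'q set"
  x_delta  :: "'q \<Rightarrow> 'q \<Rightarrow> 'q \<Rightarrow> 'q"
  x_quiescent :: 'q
  x_hidden :: 'q
  x_inputs :: "'q set"

definition xca :: "'q xca \<Rightarrow> bool" where
  "xca A \<longleftrightarrow>
     (let Q = x_states A; d = x_delta A; q = x_quiescent A; h = x_hidden A in
      finite Q \<and> q \<in> Q \<and> h \<in> Q \<and> q \<noteq> h \<and>
      x_inputs A \<subseteq> Q - {q, h} \<and>
      (\<forall>a\<in>Q. \<forall>b\<in>Q. \<forall>c\<in>Q. d a b c \<in> Q) \<and>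
      \<comment> \<open>only hidden cells may stay hidden\<close>
      (\<forall>a\<in>Q. \<forall>b\<in>Q. \<forall>c\<in>Q. d a b c = h \<longrightarrow> b = h) \<and>
      \<comment> \<open>active cells never become quiescent\<close>
      (\<forall>a\<in>Q. \<forall>b\<in>Q. \<forall>c\<in>Q. b \<noteq> q \<and> b \<noteq> h \<longrightarrow> d a b c \<noteq> q) \<and>
      \<comment> \<open>quiescence\<close>
      d q q q = q \<and> d q h q \<in> {q, h})"

text \<open>Configurations are finite lists of visible cells; every cell outside the list is
  quiescent. Cells further
  outside are quiescent with quiescent neighbours and remain quiescent or hidden.\<close>

definition xstep :: "'q xca \<Rightarrow> 'q list \<Rightarrow> 'q list" where
  "xstep A c =
     (let q = x_quiescent A; hd = x_hidden A; d = x_delta A;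
          p = q # q # c @ [q, q];
          v = (\<lambda>i. d (p ! (i - 1)) (p ! i) (p ! (i + 1)));
          h = (\<lambda>i. d (p ! i) hd (p ! (i + 1)))
      in filter (\<lambda>x. x \<noteq> hd)
           (concat (map (\<lambda>i. [v i, h i]) [1..<length c + 2]) @ [v (length c + 2)]))"

definition xrun :: "'q xca \<Rightarrow> 'q list \<Rightarrow> nat \<Rightarrow> 'q list" where
  "xrun A w t = (xstep A ^^ t) w"

definition active_count :: "'q xca \<Rightarrow> 'q list \<Rightarrow> nat" where
  "active_count A c = length (filter (\<lambda>x. x \<noteq> x_quiescent A \<and> x \<noteq> x_hidden A) c)"

end

theory Submission
  imports Defs
begin

lemma len_concat2: "length (concat (map (\<lambda>i. [f i, g i]) xs)) = 2 * length xs"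
  by (induct xs) auto

lemma xstep_len: "length (xstep A c) \<le> 2 * length c + 3"
proof -
  have "length (xstep A c) \<le> length (concat (map (\<lambda>i. [x_delta A ((x_quiescent A # x_quiescent A # c @ [x_quiescent A, x_quiescent A]) ! (i - 1))
           ((x_quiescent A # x_quiescent A # c @ [x_quiescent A, x_quiescent A]) ! i)
           ((x_quiescent A # x_quiescent A # c @ [x_quiescent A, x_quiescent A]) ! (i + 1)),
         x_delta A ((x_quiescent A # x_quiescent A # c @ [x_quiescent A, x_quiescent A]) ! i) (x_hidden A)
           ((x_quiescent A # x_quiescent A # c @ [x_quiescent A, x_quiescent A]) ! (i + 1))]) [1..<length c + 2]) @ [x]) " for x
    unfolding xstep_def Let_def by (rule order_trans[OF length_filter_le]) simp
  then show ?thesis by (simp only: length_append len_concat2 length_upt) simp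
qed

lemma xrun_len: "length (xrun A w t) + 3 \<le> (length w + 3) * 2 ^ t"
proof (induct t)
  case 0 then show ?case by (simp add: xrun_def)
next
  case (Suc t)
  have "length (xrun A w (Suc t)) \<le> 2 * length (xrun A w t) + 3"
    using xstep_len[of A "xrun A w t"] by (simp add: xrun_def)
  then show ?case using Suc by simp
qed

definition dd :: "nat \<Rightarrow> nat \<Rightarrow> nat \<Rightarrow> nat" where
  "dd a b c = (if a = 0 \<and> c = 0 \<and> b \<noteq> 2 then 0 else 2)"

definition AA :: "nat xca" where
  "AA = \<lparr> x_states = {0,1,2}, x_delta = dd, x_quiescent = 0, x_hidden = 1, x_inputs = {2} \<rparr>"

lemma AA_xca: "xca AA"
  unfolding xca_def AA_def Let_def dd_def by auto

lemma pnth: "2 \<le> j \<Longrightarrow> j \<le> L + 1 \<Longrightarrow> (0 # 0 # replicate L (2::nat) @ [0,0]) ! j = 2"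
proof -
  assume a: "2 \<le> j" "j \<le> L + 1"
  then obtain k where k: "j = Suc (Suc k)" by (metis add_2_eq_Suc le_Suc_ex)
  with a show ?thesis by (simp add: nth_append)
qed

lemma set2: "(\<And>i. 1 \<le> i \<Longrightarrow> i \<le> L + 2 \<Longrightarrow> v i = (2::nat)) \<Longrightarrow>
  (\<And>i. 1 \<le> i \<Longrightarrow> i \<le> L + 1 \<Longrightarrow> h i = 2) \<Longrightarrow>
  \<forall>y\<in>set (concat (map (\<lambda>i. [v i, h i]) [1..<L + 2]) @ [v (L + 2)]). y = 2"
  by auto

lemma AA_step: assumes "L \<ge> 1" shows "xstep AA (replicate L 2) = replicate (2 * L + 3) 2"
proof -
  let ?p = "0 # 0 # replicate L (2::nat) @ [0,0]"
  let ?v = "\<lambda>i. dd (?p ! (i - 1)) (?p ! i) (?p ! (i + 1))"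
  let ?h = "\<lambda>i. dd (?p ! i) 1 (?p ! (i + 1))"
  let ?xs = "concat (map (\<lambda>i. [?v i, ?h i]) [1..<L + 2]) @ [?v (L + 2)]"
  have v: "?v i = 2" if "1 \<le> i" "i \<le> L + 2" for i
  proof (cases "i + 1 \<le> L + 1")
    case True then show ?thesis using that pnth[of "i+1" L] by (simp add: dd_def)
  next
    case False
    then have "i = L + 1 \<or> i = L + 2" using that by auto
    then show ?thesis
    proof
      assume "i = L + 1" then show ?thesis using pnth[of i L] assms by (simp add: dd_def)
    next
      assume "i = L + 2" then show ?thesis using pnth[of "L+1" L] assms by (simp add: dd_def)
    qed
  qed
  have h: "?h i = 2" if "1 \<le> i" "i \<le> L + 1" for i
  proof (cases "i + 1 \<le> L + 1")
    case True then show ?thesis using that pnth[of "i+1" L] by (simp add: dd_def)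
  next
    case False
    then have "i = L + 1" using that by auto
    then show ?thesis using pnth[of i L] assms by (simp add: dd_def)
  qed
  have all: "\<forall>y\<in>set ?xs. y = 2"
    using set2[of L ?v ?h] v h by blast
  have len: "length ?xs = 2 * L + 3"
    by (simp only: length_append len_concat2 length_upt) simp
  have e: "xstep AA (replicate L 2) = filter (\<lambda>x. x \<noteq> 1) ?xs"
    unfolding xstep_def AA_def Let_def by simp
  have "filter (\<lambda>x. x \<noteq> 1) ?xs = ?xs" using all by (auto simp: filter_id_conv)
  moreover have "?xs = replicate (2 * L + 3) 2"
    using replicate_length_same[OF all] unfolding len by (rule sym)
  ultimately show ?thesis using e by simp
qed

lemma AA_run: assumes "n \<ge> 1"
  shows "xrun AA (replicate n 2) t = replicate ((n + 3) * 2 ^ t - 3) 2"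
proof (induct t)
  case 0 then show ?case by (simp add: xrun_def)
next
  case (Suc t)
  have pos: "(n + 3) * 2 ^ t \<ge> 4" using assms
    using mult_le_mono[of 4 "n+3" 1 "2^t"] by simp
  have "xrun AA (replicate n 2) (Suc t) = xstep AA (xrun AA (replicate n 2) t)"
    by (simp add: xrun_def)
  also have "\<dots> = replicate (2 * ((n + 3) * 2 ^ t - 3) + 3) 2"
    using Suc AA_step[of "(n + 3) * 2 ^ t - 3"] pos by simp
  also have "2 * ((n + 3) * 2 ^ t - 3) + 3 = (n + 3) * 2 ^ Suc t - 3" using pos by simp
  finally show ?case .
qed

theorem lemma1:
  shows "(\<forall>(A :: 'q xca) w t. xca A \<and> set w \<subseteq> x_inputs A \<longrightarrow>
            active_count A (xrun A w t) \<le> (length w + 3) * 2 ^ t - 3)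
       \<and> (\<exists>A :: nat xca. xca A \<and>
            (\<forall>n \<ge> 1. \<exists>w. set w \<subseteq> x_inputs A \<and> length w = n \<and>
               (\<forall>t. active_count A (xrun A w t) = (n + 3) * 2 ^ t - 3)))"
proof (intro conjI allI impI)
  fix A :: "'q xca" and w t
  have "active_count A (xrun A w t) \<le> length (xrun A w t)"
    unfolding active_count_def by (rule length_filter_le)
  then show "active_count A (xrun A w t) \<le> (length w + 3) * 2 ^ t - 3"
    using xrun_len[of A w t] by simp
next
  show "\<exists>A :: nat xca. xca A \<and>
            (\<forall>n \<ge> 1. \<exists>w. set w \<subseteq> x_inputs A \<and> length w = n \<and>
               (\<forall>t. active_count A (xrun A w t) = (n + 3) * 2 ^ t - 3))"
  proof (rule exI[of _ AA], intro conjI allI impI)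
    show "xca AA" by (rule AA_xca)
    fix n :: nat assume n: "n \<ge> 1"
    show "\<exists>w. set w \<subseteq> x_inputs AA \<and> length w = n \<and>
               (\<forall>t. active_count AA (xrun AA w t) = (n + 3) * 2 ^ t - 3)"
    proof (rule exI[of _ "replicate n 2"], intro conjI allI)
      show "set (replicate n 2) \<subseteq> x_inputs AA" by (auto simp: AA_def)
      show "length (replicate n (2::nat)) = n" by simp
      fix t
      show "active_count AA (xrun AA (replicate n 2) t) = (n + 3) * 2 ^ t - 3"
        using AA_run[OF n, of t] by (simp add: active_count_def AA_def)
    qed
  qed
qed

end
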